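(* Let $n$ be a positive integer and let $\log n/n \ll p = p(n) \le 1$. Let $\varepsilon > 0$ be an (arbitrarily small) constant, let $c > 0$ be a constant, and let $D = (V,E) \in \mathcal{D}(n,p)$. For a set $Y \subseteq V$, let $B_Y$ denote the set of all vertices $u \in V \setminus Y$ for which $|\deg^+_D(u,Y) - |Y|p| \ge \varepsilon |Y| p$ or $|\deg^-_D(u,Y) - |Y|p| \ge \varepsilon |Y| p$. Let $b = \max\{|B_Y| : Y \subseteq V,\ |Y| \ge cn\}$. Then a.a.s. $b \le p^{-1}\log n$.
   Context: $\mathcal{D}(n,p)$ is the random digraph on $[n]$ where each ordered pair $(u,v)$, $u\ne v$, is an arc independently with probability $p$. $\deg^+_D(u,Y)$ is the number of $y \in Y$ with $(u,y)$ an arc, $\deg^-_D(u,Y)$ the number of $y\in Y$ with $(y,u)$ an arc. a.a.s. means with probability tending to $1$ as $n\to\infty$; $f \ll g$ means $f/g \to 0$; $\log$ is natural. *)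

theory Defs
  imports "HOL-Analysis.Analysis" "HOL-Library.Landau_Symbols"
begin

definition possible_arcs :: "nat \<Rightarrow> (nat \<times> nat) set" where
  "possible_arcs n = {(u,v). u < n \<and> v < n \<and> u \<noteq> v}"

definition dnp_weight :: "nat \<Rightarrow> real \<Rightarrow> (nat \<times> nat) set \<Rightarrow> real" where
  "dnp_weight n p E = p ^ card E * (1 - p) ^ (card (possible_arcs n) - card E)"

text \<open>Probability that the random digraph D(n,p) (given by its arc set) has property P.\<close>
definition dnp_prob :: "nat \<Rightarrow> real \<Rightarrow> ((nat \<times> nat) set \<Rightarrow> bool) \<Rightarrow> real" where
  "dnp_prob n p P = (\<Sum>E \<in> {E. E \<subseteq> possible_arcs n \<and> P E}. dnp_weight n p E)"

definition out_deg :: "(nat \<times> nat) set \<Rightarrow> nat \<Rightarrow> nat set \<Rightarrow> nat" where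
  "out_deg E u Y = card {y \<in> Y. (u, y) \<in> E}"

definition in_deg :: "(nat \<times> nat) set \<Rightarrow> nat \<Rightarrow> nat set \<Rightarrow> nat" where
  "in_deg E u Y = card {y \<in> Y. (y, u) \<in> E}"

definition bad_set :: "nat \<Rightarrow> real \<Rightarrow> real \<Rightarrow> (nat \<times> nat) set \<Rightarrow> nat set \<Rightarrow> nat set" where
  "bad_set n p \<epsilon> E Y = {u \<in> {..<n} - Y.
      \<bar>real (out_deg E u Y) - real (card Y) * p\<bar> \<ge> \<epsilon> * real (card Y) * p \<or>
      \<bar>real (in_deg E u Y) - real (card Y) * p\<bar> \<ge> \<epsilon> * real (card Y) * p}"

end

theory Submission
  imports Defs "HOL-Library.FuncSet"
begin


definition wt :: "(nat\<times>nat) set \<Rightarrow> real \<Rightarrow> (nat\<times>nat) set \<Rightarrow> real" where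
  "wt N p E = (\<Prod>a\<in>E. p) * (\<Prod>a\<in>N-E. 1 - p)"

lemma finite_pa: "finite (possible_arcs n)"
  unfolding possible_arcs_def
  by (rule finite_subset[of _ "{..<n} \<times> {..<n}"]) auto

lemma dnp_weight_wt: "E \<subseteq> possible_arcs n \<Longrightarrow> dnp_weight n p E = wt (possible_arcs n) p E"
  unfolding dnp_weight_def wt_def
  using finite_pa[of n] by (simp add: card_Diff_subset finite_subset)

lemma dnp_prob_alt: "dnp_prob n p P = (\<Sum>E\<in>Pow (possible_arcs n). if P E then wt (possible_arcs n) p E else 0)"
proof -
  have "dnp_prob n p P = (\<Sum>E\<in>{E\<in>Pow (possible_arcs n). P E}. wt (possible_arcs n) p E)"
    unfolding dnp_prob_def by (intro sum.cong) (auto simp: dnp_weight_wt)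
  also have "\<dots> = (\<Sum>E\<in>Pow (possible_arcs n). if P E then wt (possible_arcs n) p E else 0)"
    by (rule sum.inter_filter) (simp add: finite_pa)
  finally show ?thesis .
qed

lemma wt_nonneg: "0 \<le> p \<Longrightarrow> p \<le> 1 \<Longrightarrow> 0 \<le> wt N p E"
  unfolding wt_def by (intro mult_nonneg_nonneg prod_nonneg) auto

lemma L1:
  fixes g :: "'i \<Rightarrow> nat\<times>nat" and \<phi> :: "'i \<Rightarrow> bool \<Rightarrow> real"
  assumes fN: "finite N" and inj: "inj_on g I" and sub: "g ` I \<subseteq> N" and fI: "finite I"
  shows "(\<Sum>E\<in>Pow N. wt N p E * (\<Prod>i\<in>I. \<phi> i (g i \<in> E))) = (\<Prod>i\<in>I. p * \<phi> i True + (1 - p) * \<phi> i False)"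
proof -
  define \<psi> where "\<psi> a b = (if a \<in> g ` I then \<phi> (inv_into I g a) b else 1)" for a b
  have psi: "\<psi> (g i) b = \<phi> i b" if "i \<in> I" for i b
    unfolding \<psi>_def using that inj by (simp add: inv_into_f_f)
  have reix: "(\<Prod>a\<in>g`I. h a) = (\<Prod>i\<in>I. h (g i))" for h :: "nat\<times>nat \<Rightarrow> real"
    using prod.reindex[OF inj, of h] by (simp add: comp_def)
  have 1: "(\<Prod>i\<in>I. \<phi> i (g i \<in> E)) = (\<Prod>a\<in>N. \<psi> a (a \<in> E))" for E
  proof -
    have "(\<Prod>i\<in>I. \<phi> i (g i \<in> E)) = (\<Prod>i\<in>I. \<psi> (g i) (g i \<in> E))"
      by (rule prod.cong) (simp_all add: psi)
    also have "\<dots> = (\<Prod>a\<in>g`I. \<psi> a (a \<in> E))" by (rule reix[symmetric])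
    also have "\<dots> = (\<Prod>a\<in>N. \<psi> a (a \<in> E))"
      apply (rule prod.mono_neutral_left[OF fN sub])
      unfolding \<psi>_def by auto
    finally show ?thesis .
  qed
  have 2: "wt N p E * (\<Prod>i\<in>I. \<phi> i (g i \<in> E)) = (\<Prod>a\<in>E. p * \<psi> a True) * (\<Prod>a\<in>N-E. (1-p) * \<psi> a False)"
    if "E \<in> Pow N" for E
  proof -
    have EN: "E \<subseteq> N" using that by auto
    have "(\<Prod>a\<in>N. \<psi> a (a \<in> E)) = (\<Prod>a\<in>E. \<psi> a (a \<in> E)) * (\<Prod>a\<in>N-E. \<psi> a (a \<in> E))"
      using prod.subset_diff[OF EN fN] by (simp only: mult.commute)
    also have "(\<Prod>a\<in>E. \<psi> a (a \<in> E)) = (\<Prod>a\<in>E. \<psi> a True)" by (rule prod.cong) auto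
    also have "(\<Prod>a\<in>N-E. \<psi> a (a \<in> E)) = (\<Prod>a\<in>N-E. \<psi> a False)" by (rule prod.cong) auto
    finally have "(\<Prod>a\<in>N. \<psi> a (a \<in> E)) = (\<Prod>a\<in>E. \<psi> a True) * (\<Prod>a\<in>N-E. \<psi> a False)" .
    then show ?thesis unfolding wt_def 1 prod.distrib by (simp only: ac_simps)
  qed
  have "(\<Sum>E\<in>Pow N. wt N p E * (\<Prod>i\<in>I. \<phi> i (g i \<in> E))) = (\<Sum>E\<in>Pow N. (\<Prod>a\<in>E. p * \<psi> a True) * (\<Prod>a\<in>N-E. (1-p) * \<psi> a False))"
    by (rule sum.cong) (simp_all only: 2)
  also have "\<dots> = (\<Prod>a\<in>N. p * \<psi> a True + (1-p) * \<psi> a False)"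
    by (rule prod_add[OF fN, symmetric])
  also have "\<dots> = (\<Prod>a\<in>g`I. p * \<psi> a True + (1-p) * \<psi> a False)"
    apply (rule prod.mono_neutral_right[OF fN sub])
    unfolding \<psi>_def by auto
  also have "\<dots> = (\<Prod>i\<in>I. p * \<psi> (g i) True + (1-p) * \<psi> (g i) False)" by (rule reix)
  also have "\<dots> = (\<Prod>i\<in>I. p * \<phi> i True + (1 - p) * \<phi> i False)"
    by (rule prod.cong) (simp_all add: psi)
  finally show ?thesis .
qed

lemma total: "(\<Sum>E\<in>Pow N. wt N p E) = 1" if "finite N"
  using L1[OF that, of id "{}" p "\<lambda>_ _. 1"] by simp

lemma compl: "dnp_prob n p P = 1 - dnp_prob n p (\<lambda>E. \<not> P E)"
proof -
  have "dnp_prob n p P + dnp_prob n p (\<lambda>E. \<not> P E) = (\<Sum>E\<in>Pow (possible_arcs n). wt (possible_arcs n) p E)"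
    unfolding dnp_prob_alt sum.distrib[symmetric] by (intro sum.cong) auto
  then show ?thesis using total[OF finite_pa] by simp
qed

lemma union_bound:
  assumes "0 \<le> p" "p \<le> 1" "finite I" "\<And>E. P E \<Longrightarrow> \<exists>i\<in>I. Q i E"
  shows "dnp_prob n p P \<le> (\<Sum>i\<in>I. dnp_prob n p (Q i))"
proof -
  let ?N = "possible_arcs n"
  have "dnp_prob n p P \<le> (\<Sum>E\<in>Pow ?N. \<Sum>i\<in>I. if Q i E then wt ?N p E else 0)"
    unfolding dnp_prob_alt
  proof (intro sum_mono)
    fix E
    show "(if P E then wt ?N p E else 0) \<le> (\<Sum>i\<in>I. if Q i E then wt ?N p E else 0)"
    proof (cases "P E")
      case True
      then obtain i where i: "i \<in> I" "Q i E" using assms(4) by blast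
      have "(if Q i E then wt ?N p E else 0) \<le> (\<Sum>i\<in>I. if Q i E then wt ?N p E else 0)"
        using i assms by (intro member_le_sum) (auto simp: wt_nonneg)
      then show ?thesis using True i by simp
    next
      case False then show ?thesis using assms by (auto intro!: sum_nonneg simp: wt_nonneg)
    qed
  qed
  also have "\<dots> = (\<Sum>i\<in>I. dnp_prob n p (Q i))"
    unfolding dnp_prob_alt by (rule sum.swap)
  finally show ?thesis .
qed

lemma markov:
  assumes "0 \<le> p" "p \<le> 1" "\<And>E. Q E \<Longrightarrow> 1 \<le> F E" "\<And>E. 0 \<le> F E"
  shows "dnp_prob n p Q \<le> (\<Sum>E\<in>Pow (possible_arcs n). wt (possible_arcs n) p E * F E)"
  unfolding dnp_prob_alt
proof (intro sum_mono)
  fix E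
  have "0 \<le> wt (possible_arcs n) p E" using assms wt_nonneg by auto
  then show "(if Q E then wt (possible_arcs n) p E else 0) \<le> wt (possible_arcs n) p E * F E"
    using assms(3,4)[of E] mult_left_mono[of 1 "F E" "wt (possible_arcs n) p E"] by auto
qed



lemma exp_quad: fixes l :: real assumes "0 \<le> l" "l \<le> 1" "s = 1 \<or> s = -1"
  shows "exp (l * s) \<le> 1 + l * s + l^2"
  using assms(3)
proof
  assume "s = 1" then show ?thesis using exp_bound[OF assms(1,2)] by simp
next
  assume s: "s = -1"
  have e: "1 + l \<le> exp l" by simp
  have "exp (-l) = 1 / exp l" by (simp add: exp_minus field_simps)
  also have "\<dots> \<le> 1 / (1 + l)" using e assms by (intro divide_left_mono) auto
  also have "\<dots> \<le> 1 - l + l^2"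
  proof -
    have "1 \<le> (1 - l + l^2) * (1 + l)" using assms by (simp add: algebra_simps power2_eq_square power3_eq_cube)
    then show ?thesis using assms by (simp add: divide_le_eq)
  qed
  finally show ?thesis using s by simp
qed

lemma chernoff_one:
  fixes p e s :: real and m :: nat
  assumes p: "0 \<le> p" "p \<le> 1" and e: "0 < e" "e \<le> 1" and s: "s = 1 \<or> s = -1"
  shows "exp (-(e/2) * (s * m * p + e * m * p)) * (p * exp (e/2 * s) + (1 - p)) ^ m \<le> exp (-(m * p * e^2 / 4))"
proof -
  define l where "l = e/2"
  have l: "0 \<le> l" "l \<le> 1" using e by (auto simp: l_def)
  have b0: "0 \<le> p * exp (l * s) + (1 - p)" using p by (simp add: add_nonneg_nonneg)
  have "p * exp (l * s) + (1 - p) = 1 + p * (exp (l * s) - 1)" by (simp add: algebra_simps)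
  also have "\<dots> \<le> exp (p * (exp (l * s) - 1))" by (rule exp_ge_add_one_self)
  finally have "(p * exp (l * s) + (1 - p)) ^ m \<le> exp (p * (exp (l * s) - 1)) ^ m"
    using b0 by (intro power_mono) auto
  also have "\<dots> = exp (m * (p * (exp (l * s) - 1)))" by (simp add: exp_of_nat_mult)
  finally have 1: "(p * exp (l * s) + (1 - p)) ^ m \<le> exp (m * (p * (exp (l * s) - 1)))" .
  have "exp (-l * (s * m * p + e * m * p)) * (p * exp (l * s) + (1 - p)) ^ m
     \<le> exp (-l * (s * m * p + e * m * p)) * exp (m * (p * (exp (l * s) - 1)))"
    using 1 by (intro mult_left_mono) auto
  also have "\<dots> = exp (m * p * (exp (l * s) - 1 - l * s - l * e))"
    by (simp add: exp_add[symmetric] algebra_simps)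
  also have "\<dots> \<le> exp (m * p * (l^2 - l * e))"
  proof -
    have "exp (l * s) - 1 - l * s - l * e \<le> l^2 - l * e" using exp_quad[OF l s] by simp
    moreover have "0 \<le> m * p" using p by simp
    ultimately show ?thesis by (intro exp_le_cancel_iff[THEN iffD2] mult_left_mono) auto
  qed
  also have "l^2 - l * e = -(e^2/4)" by (simp add: l_def power2_eq_square)
  finally show ?thesis by (simp add: l_def)
qed

definition arc :: "bool \<Rightarrow> nat \<Rightarrow> nat \<Rightarrow> nat\<times>nat" where
  "arc d u y = (if d then (u,y) else (y,u))"
definition sg :: "bool \<Rightarrow> real" where "sg b = (if b then 1 else -1)"
definition Aev :: "nat set \<Rightarrow> nat set \<Rightarrow> (nat \<Rightarrow> bool \<times> bool) \<Rightarrow> real \<Rightarrow> real \<Rightarrow> (nat\<times>nat) set \<Rightarrow> bool" where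
  "Aev Y S \<sigma> e p E = (\<forall>u\<in>S. sg (snd (\<sigma> u)) * (real (card {y\<in>Y. arc (fst (\<sigma> u)) u y \<in> E}) - real (card Y) * p) \<ge> e * real (card Y) * p)"

lemma card_filter_sum: "finite Y \<Longrightarrow> real (card {y\<in>Y. P y}) = (\<Sum>y\<in>Y. if P y then 1 else 0)"
  by (simp add: sum.inter_filter[symmetric])

lemma event_bound:
  assumes Y: "Y \<subseteq> {..<n}" and S: "S \<subseteq> {..<n} - Y" and p: "0 \<le> p" "p \<le> 1" and e: "0 < e" "e \<le> 1"
  shows "dnp_prob n p (Aev Y S \<sigma> e p) \<le> exp (-(real (card Y) * p * e^2 / 4)) ^ card S"
proof -
  define l where "l = e/2"
  define m where "m = card Y"
  define N where "N = possible_arcs n"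
  have fY: "finite Y" using Y finite_subset by blast
  have fS: "finite S" using S finite_subset by blast
  define s where "s u = sg (snd (\<sigma> u))" for u
  define X where "X E u = real (card {y\<in>Y. arc (fst (\<sigma> u)) u y \<in> E})" for E u
  define C where "C u = exp (-l * (s u * m * p + e * m * p))" for u
  define \<phi> where "\<phi> i b = exp (l * s (fst i) * (if b then 1 else 0))" for i :: "nat\<times>nat" and b
  define g where "g i = arc (fst (\<sigma> (fst i))) (fst i) (snd i)" for i
  define F where "F E = (\<Prod>u\<in>S. exp (l * (s u * (X E u - m * p) - e * m * p)))" for E
  have s1: "s u = 1 \<or> s u = -1" for u by (simp add: s_def sg_def)
  have "dnp_prob n p (Aev Y S \<sigma> e p) \<le> (\<Sum>E\<in>Pow N. wt N p E * F E)"
    unfolding N_def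
  proof (rule markov[OF p])
    fix E assume "Aev Y S \<sigma> e p E"
    then have "\<forall>u\<in>S. 1 \<le> exp (l * (s u * (X E u - m * p) - e * m * p))"
      using e by (auto simp: Aev_def s_def X_def m_def l_def)
    then show "1 \<le> F E" unfolding F_def by (intro prod_ge_1) auto
  next
    fix E show "0 \<le> F E" unfolding F_def by (rule prod_nonneg) auto
  qed
  also have "F E = (\<Prod>u\<in>S. C u) * (\<Prod>i\<in>S\<times>Y. \<phi> i (g i \<in> E))" for E
  proof -
    have "exp (l * (s u * (X E u - m * p) - e * m * p)) = C u * (\<Prod>y\<in>Y. \<phi> (u,y) (g (u,y) \<in> E))" for u
    proof -
      have "exp (l * (s u * (X E u - m * p) - e * m * p)) = C u * exp (l * s u * X E u)"
        unfolding C_def by (simp add: exp_add[symmetric] algebra_simps)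
      also have "l * s u * X E u = (\<Sum>y\<in>Y. l * s u * (if g (u,y) \<in> E then 1 else 0))"
        unfolding X_def card_filter_sum[OF fY] sum_distrib_left g_def by simp
      also have "exp \<dots> = (\<Prod>y\<in>Y. \<phi> (u,y) (g (u,y) \<in> E))"
        unfolding exp_sum[OF fY] \<phi>_def by simp
      finally show ?thesis .
    qed
    then have "F E = (\<Prod>u\<in>S. C u * (\<Prod>y\<in>Y. \<phi> (u,y) (g (u,y) \<in> E)))"
      unfolding F_def by simp
    also have "\<dots> = (\<Prod>u\<in>S. C u) * (\<Prod>u\<in>S. \<Prod>y\<in>Y. \<phi> (u,y) (g (u,y) \<in> E))"
      by (simp add: prod.distrib)
    also have "(\<Prod>u\<in>S. \<Prod>y\<in>Y. \<phi> (u,y) (g (u,y) \<in> E)) = (\<Prod>i\<in>S\<times>Y. \<phi> i (g i \<in> E))"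
      by (simp add: prod.cartesian_product case_prod_beta')
    finally show ?thesis .
  qed
  then have "(\<Sum>E\<in>Pow N. wt N p E * F E) = (\<Prod>u\<in>S. C u) * (\<Sum>E\<in>Pow N. wt N p E * (\<Prod>i\<in>S\<times>Y. \<phi> i (g i \<in> E)))"
    by (simp add: sum_distrib_left ac_simps)
  also have "(\<Sum>E\<in>Pow N. wt N p E * (\<Prod>i\<in>S\<times>Y. \<phi> i (g i \<in> E))) = (\<Prod>i\<in>S\<times>Y. p * \<phi> i True + (1 - p) * \<phi> i False)"
  proof (rule L1)
    show "finite N" unfolding N_def by (rule finite_pa)
    show "finite (S \<times> Y)" using fS fY by simp
    show "inj_on g (S \<times> Y)"
      using S unfolding inj_on_def g_def arc_def by auto
    show "g ` (S \<times> Y) \<subseteq> N"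
      using S Y unfolding N_def possible_arcs_def g_def arc_def by auto
  qed
  also have "(\<Prod>i\<in>S\<times>Y. p * \<phi> i True + (1 - p) * \<phi> i False) = (\<Prod>u\<in>S. (p * exp (l * s u) + (1 - p)) ^ m)"
  proof -
    have "(\<Prod>i\<in>S\<times>Y. p * \<phi> i True + (1 - p) * \<phi> i False) = (\<Prod>u\<in>S. \<Prod>y\<in>Y. p * \<phi> (u,y) True + (1 - p) * \<phi> (u,y) False)"
      by (simp add: prod.cartesian_product case_prod_beta')
    then show ?thesis by (simp add: \<phi>_def m_def)
  qed
  also have "(\<Prod>u\<in>S. C u) * (\<Prod>u\<in>S. (p * exp (l * s u) + (1 - p)) ^ m) = (\<Prod>u\<in>S. C u * (p * exp (l * s u) + (1 - p)) ^ m)"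
    by (simp add: prod.distrib)
  also have "\<dots> \<le> (\<Prod>u\<in>S. exp (-(real (card Y) * p * e^2 / 4)))"
  proof (rule prod_mono)
    fix u assume "u \<in> S"
    have "C u * (p * exp (l * s u) + (1 - p)) ^ m \<le> exp (-(m * p * e^2 / 4))"
      unfolding C_def l_def using chernoff_one[OF p e s1[of u], of m] by (simp add: ac_simps)
    moreover have "0 \<le> C u * (p * exp (l * s u) + (1 - p)) ^ m"
      using p unfolding C_def by (intro mult_nonneg_nonneg zero_le_power) (auto intro: add_nonneg_nonneg)
    ultimately show "0 \<le> C u * (p * exp (l * s u) + (1 - p)) ^ m \<and> C u * (p * exp (l * s u) + (1 - p)) ^ m \<le> exp (-(real (card Y) * p * e^2 / 4))"
      by (simp add: m_def)
  qed
  also have "\<dots> = exp (-(real (card Y) * p * e^2 / 4)) ^ card S" by simp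
  finally show ?thesis .
qed



lemma bad_Aev:
  assumes S: "S \<subseteq> bad_set n p \<epsilon> E Y" and e: "e \<le> \<epsilon>" and p: "0 \<le> p"
  shows "\<exists>\<sigma>\<in>(\<Pi>\<^sub>E u\<in>S. UNIV). Aev Y S \<sigma> e p E"
proof -
  define m where "m = real (card Y)"
  define ou where "ou u = real (out_deg E u Y)" for u
  define iu where "iu u = real (in_deg E u Y)" for u
  define \<sigma> where "\<sigma> u = (if \<bar>ou u - m * p\<bar> \<ge> \<epsilon> * m * p then (True, ou u \<ge> m * p) else (False, iu u \<ge> m * p))" for u
  have mp: "0 \<le> m * p" using p by (simp add: m_def)
  have "Aev Y S (restrict \<sigma> S) e p E"
    unfolding Aev_def
  proof
    fix u assume u: "u \<in> S"
    then have b: "\<bar>ou u - m * p\<bar> \<ge> \<epsilon> * m * p \<or> \<bar>iu u - m * p\<bar> \<ge> \<epsilon> * m * p"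
      using S unfolding bad_set_def ou_def iu_def m_def by auto
    have ee: "e * m * p \<le> \<epsilon> * m * p" using e mp by (simp add: mult.assoc mult_right_mono)
    have co: "real (card {y\<in>Y. arc True u y \<in> E}) = ou u" unfolding ou_def out_deg_def arc_def by simp
    have ci: "real (card {y\<in>Y. arc False u y \<in> E}) = iu u" unfolding iu_def in_deg_def arc_def by simp
    show "e * real (card Y) * p \<le> sg (snd (restrict \<sigma> S u)) * (real (card {y\<in>Y. arc (fst (restrict \<sigma> S u)) u y \<in> E}) - real (card Y) * p)"
      using u b ee co ci unfolding \<sigma>_def m_def[symmetric] sg_def by (auto split: if_splits)
  qed
  then show ?thesis by (intro bexI[of _ "restrict \<sigma> S"]) auto
qed

lemma card_UNIV_bb: "card (UNIV :: (bool \<times> bool) set) = 4"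
  by (simp add: UNIV_Times_UNIV[symmetric] card_cartesian_product del: UNIV_Times_UNIV)

lemma fixed_n_bound:
  assumes p: "0 \<le> p" "p \<le> 1" and e: "0 < e" "e \<le> 1" "e \<le> \<epsilon>" and c: "0 < c"
  shows "dnp_prob n p (\<lambda>E. \<exists>Y. Y \<subseteq> {..<n} \<and> c * real n \<le> real (card Y) \<and> k \<le> card (bad_set n p \<epsilon> E Y))
     \<le> 2^n * (real n ^ k * (4 ^ k * exp (-(c * real n * p * e^2 / 4)) ^ k))"
proof -
  define B where "B = exp (-(c * real n * p * e^2 / 4)) ^ k"
  have B0: "0 \<le> B" unfolding B_def by simp
  define IY where "IY = {Y\<in>Pow {..<n}. c * real n \<le> real (card Y)}"
  have "dnp_prob n p (\<lambda>E. \<exists>Y. Y \<subseteq> {..<n} \<and> c * real n \<le> real (card Y) \<and> k \<le> card (bad_set n p \<epsilon> E Y))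
     \<le> (\<Sum>Y\<in>IY. dnp_prob n p (\<lambda>E. k \<le> card (bad_set n p \<epsilon> E Y)))"
    by (rule union_bound[OF p]) (auto simp: IY_def)
  also have "\<dots> \<le> real (card IY) * (real n ^ k * (4 ^ k * B))"
  proof (rule sum_bounded_above)
    fix Y assume Y: "Y \<in> IY"
    then have Yn: "Y \<subseteq> {..<n}" and cY: "c * real n \<le> real (card Y)" by (auto simp: IY_def)
    define IS where "IS = {S. S \<subseteq> {..<n} - Y \<and> card S = k}"
    have fIS: "finite IS" unfolding IS_def by (rule finite_subset[of _ "Pow {..<n}"]) auto
    have "dnp_prob n p (\<lambda>E. k \<le> card (bad_set n p \<epsilon> E Y)) \<le> (\<Sum>S\<in>IS. dnp_prob n p (\<lambda>E. \<exists>\<sigma>\<in>(\<Pi>\<^sub>E u\<in>S. UNIV). Aev Y S \<sigma> e p E))"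
    proof (rule union_bound[OF p fIS])
      fix E assume "k \<le> card (bad_set n p \<epsilon> E Y)"
      then obtain S where S: "S \<subseteq> bad_set n p \<epsilon> E Y" "card S = k"
        by (meson obtain_subset_with_card_n)
      then have "S \<in> IS" unfolding IS_def bad_set_def by auto
      then show "\<exists>S\<in>IS. \<exists>\<sigma>\<in>(\<Pi>\<^sub>E u\<in>S. UNIV). Aev Y S \<sigma> e p E"
        using bad_Aev[OF S(1) e(3) p(1)] by blast
    qed
    also have "\<dots> \<le> real (card IS) * (4 ^ k * B)"
    proof (rule sum_bounded_above)
      fix S assume S: "S \<in> IS"
      then have Sn: "S \<subseteq> {..<n} - Y" and cS: "card S = k" by (auto simp: IS_def)
      have fS: "finite S" using Sn finite_subset by blast
      have "dnp_prob n p (\<lambda>E. \<exists>\<sigma>\<in>(\<Pi>\<^sub>E u\<in>S. UNIV). Aev Y S \<sigma> e p E) \<le> (\<Sum>\<sigma>\<in>(\<Pi>\<^sub>E u\<in>S. UNIV). dnp_prob n p (Aev Y S \<sigma> e p))"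
        by (rule union_bound[OF p]) (auto simp: fS finite_PiE)
      also have "\<dots> \<le> real (card (\<Pi>\<^sub>E u\<in>S. (UNIV :: (bool\<times>bool) set))) * B"
      proof (rule sum_bounded_above)
        fix \<sigma>
        have "dnp_prob n p (Aev Y S \<sigma> e p) \<le> exp (-(real (card Y) * p * e^2 / 4)) ^ card S"
          by (rule event_bound[OF Yn Sn p e(1,2)])
        also have "\<dots> \<le> B" unfolding B_def cS
        proof (intro power_mono)
          have "c * real n * p * e^2 \<le> real (card Y) * p * e^2"
            using cY p by (intro mult_right_mono) auto
          then show "exp (-(real (card Y) * p * e^2 / 4)) \<le> exp (-(c * real n * p * e^2 / 4))" by simp
        qed simp
        finally show "dnp_prob n p (Aev Y S \<sigma> e p) \<le> B" .
      qed
      also have "card (\<Pi>\<^sub>E u\<in>S. (UNIV :: (bool\<times>bool) set)) = 4 ^ k"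
        using fS cS by (simp add: card_PiE card_UNIV_bb)
      finally show "dnp_prob n p (\<lambda>E. \<exists>\<sigma>\<in>(\<Pi>\<^sub>E u\<in>S. UNIV). Aev Y S \<sigma> e p E) \<le> 4 ^ k * B" by simp
    qed
    also have "\<dots> \<le> real n ^ k * (4 ^ k * B)"
    proof (rule mult_right_mono)
      have "card IS = card ({..<n} - Y) choose k" unfolding IS_def by (rule n_subsets) simp
      also have "\<dots> \<le> n ^ k"
      proof (cases "k \<le> card ({..<n} - Y)")
        case True
        then have "card ({..<n} - Y) choose k \<le> card ({..<n} - Y) ^ k" by (rule binomial_le_pow)
        also have "\<dots> \<le> n ^ k" by (intro power_mono) (auto intro: order.trans[OF card_mono[of "{..<n}"]])
        finally show ?thesis .
      qed (simp add: binomial_eq_0)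
      finally show "real (card IS) \<le> real n ^ k" by (metis of_nat_le_iff of_nat_power)
    qed (use B0 in simp)
    finally show "dnp_prob n p (\<lambda>E. k \<le> card (bad_set n p \<epsilon> E Y)) \<le> real n ^ k * (4 ^ k * B)" .
  qed
  also have "\<dots> \<le> 2^n * (real n ^ k * (4 ^ k * B))"
  proof (rule mult_right_mono)
    have "card IY \<le> card (Pow {..<n})" unfolding IY_def by (intro card_mono) auto
    then show "real (card IY) \<le> 2 ^ n" by (simp add: card_Pow)
  qed (use B0 in simp)
  finally show ?thesis unfolding B_def .
qed



lemma numeric:
  fixes n k :: nat and p d L :: real
  assumes n4: "4 \<le> n" and d: "0 < d" and p: "0 < p"
    and lnp: "ln n \<le> (d/4) * (n * p)" and T: "2 * (ln 2 + 1) / d \<le> ln n"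
    and L: "L = ln n / p" and kL: "L \<le> real k"
  shows "2^n * (real n ^ k * (4 ^ k * exp (-(d * real n * p)) ^ k)) \<le> exp (- real n)"
proof -
  have n0: "0 < real n" using n4 by simp
  have "2^n * (real n ^ k * (4 ^ k * exp (-(d * real n * p)) ^ k))
      = exp (n * ln 2 + k * (ln n + ln 4 - d * n * p))"
  proof -
    have a: "(2::real)^n = exp (n * ln 2)" by (simp add: exp_of_nat_mult)
    have b: "real n ^ k = exp (k * ln n)" using n0 by (simp add: exp_of_nat_mult)
    have c: "(4::real) ^ k = exp (k * ln 4)" by (simp add: exp_of_nat_mult)
    have e: "exp (-(d * real n * p)) ^ k = exp (k * (-(d * real n * p)))" by (rule exp_of_nat_mult[symmetric])
    show ?thesis unfolding a b c e by (simp add: exp_add[symmetric] algebra_simps)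
  qed
  also have "\<dots> \<le> exp (- real n)"
  proof -
    have l4: "ln 4 \<le> ln (real n)" using n4 by simp
    have X: "ln n + ln 4 - d * n * p \<le> -(d * n * p / 2)" using l4 lnp by simp
    have "k * (ln n + ln 4 - d * n * p) \<le> k * (-(d * n * p / 2))"
      using X by (intro mult_left_mono) auto
    also have "\<dots> \<le> L * (-(d * n * p / 2))"
      using kL d n0 p by (intro mult_right_mono_neg) auto
    also have "\<dots> = - (d * n * ln n / 2)" unfolding L using p by (simp add: field_simps)
    finally have 1: "k * (ln n + ln 4 - d * n * p) \<le> - (d * n * ln n / 2)" .
    have "d * (2 * (ln 2 + 1) / d) \<le> d * ln n" using T d by (intro mult_left_mono) auto
    then have "2 * (ln 2 + 1) \<le> d * ln n" using d by simp
    then have "n * (2 * (ln 2 + 1)) \<le> n * (d * ln n)" using n0 by (intro mult_left_mono) auto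
    then have "n * ln 2 - d * n * ln n / 2 \<le> - n" by (simp add: algebra_simps)
    with 1 show ?thesis by simp
  qed
  finally show ?thesis .
qed

theorem lemma4p1:
  fixes p :: "nat \<Rightarrow> real" and \<epsilon> c :: real
  assumes "(\<lambda>n. ln (real n) / real n) \<in> o(p)"
    and "\<And>n. 0 \<le> p n \<and> p n \<le> 1"
    and "\<epsilon> > 0" and "c > 0"
  shows "(\<lambda>n. dnp_prob n (p n)
            (\<lambda>E. \<forall>Y. Y \<subseteq> {..<n} \<and> real (card Y) \<ge> c * real n \<longrightarrow>
                   real (card (bad_set n (p n) \<epsilon> E Y)) \<le> ln (real n) / p n))
         \<longlonglongrightarrow> 1"
proof -
  note small = assms(1) and pb = assms(2) and eps = assms(3) and c = assms(4)
  define e where "e = min \<epsilon> 1"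
  have e: "0 < e" "e \<le> 1" "e \<le> \<epsilon>" using eps by (auto simp: e_def)
  define d where "d = c * e^2 / 4"
  have d: "0 < d" using c e by (simp add: d_def)
  define T where "T = 2 * (ln 2 + 1) / d"
  define G where "G n E = (\<forall>Y. Y \<subseteq> {..<n} \<and> real (card Y) \<ge> c * real n \<longrightarrow>
                   real (card (bad_set n (p n) \<epsilon> E Y)) \<le> ln (real n) / p n)" for n E
  define q where "q n = dnp_prob n (p n) (\<lambda>E. \<not> G n E)" for n
  have ev1: "\<forall>\<^sub>F n in sequentially. norm (ln (real n) / real n) \<le> (d/4) * norm (p n)"
    using landau_o.smallD[OF small, of "d/4"] d by simp
  have ev2: "\<forall>\<^sub>F n in sequentially. nat \<lceil>max 4 (exp T)\<rceil> \<le> n"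
    by (rule eventually_ge_at_top)
  have "\<forall>\<^sub>F n in sequentially. 0 \<le> q n \<and> q n \<le> exp (- real n)"
    using ev1 ev2
  proof eventually_elim
    case (elim n)
    have nT: "max 4 (exp T) \<le> real n" using elim(2) by linarith
    then have n4: "4 \<le> n" and nT': "exp T \<le> real n" by auto
    have n0: "0 < real n" using n4 by simp
    have lnT: "T \<le> ln n" using nT' n0 by (metis exp_le_cancel_iff exp_ln)
    have lnpos: "0 < ln (real n)" using n4 by simp
    have p0: "0 \<le> p n" "p n \<le> 1" using pb by auto
    have "ln (real n) / real n \<le> (d/4) * p n" using elim(1) lnpos p0 n0 by simp
    then have lnp: "ln n \<le> (d/4) * (n * p n)" using n0 by (simp add: divide_le_eq ac_simps)
    have pp: "0 < p n"
    proof (rule ccontr)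
      assume "\<not> 0 < p n" then have "p n = 0" using p0 by simp
      then show False using lnp lnpos by simp
    qed
    define L where "L = ln (real n) / p n"
    define k where "k = nat \<lfloor>L\<rfloor> + 1"
    have L0: "0 \<le> L" unfolding L_def using lnpos pp by simp
    have kL: "L \<le> real k" unfolding k_def using L0 by linarith
    have q0: "0 \<le> q n" unfolding q_def dnp_prob_def
      by (intro sum_nonneg) (simp add: dnp_weight_def p0)
    have "q n \<le> dnp_prob n (p n) (\<lambda>E. \<exists>Y. Y \<subseteq> {..<n} \<and> c * real n \<le> real (card Y) \<and> k \<le> card (bad_set n (p n) \<epsilon> E Y))"
    proof -
      have "\<exists>Y. Y \<subseteq> {..<n} \<and> c * real n \<le> real (card Y) \<and> k \<le> card (bad_set n (p n) \<epsilon> E Y)"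
        if nG: "\<not> G n E" for E
      proof -
        obtain Y where Y: "Y \<subseteq> {..<n}" "c * real n \<le> real (card Y)"
          "L < real (card (bad_set n (p n) \<epsilon> E Y))" using nG unfolding G_def L_def by (meson not_le)
        have "k \<le> card (bad_set n (p n) \<epsilon> E Y)" unfolding k_def using Y(3) L0 by linarith
        with Y show ?thesis by blast
      qed
      then show ?thesis
        using union_bound[OF p0 finite.insertI[OF finite.emptyI, of "()"],
          of "\<lambda>E. \<not> G n E" "\<lambda>_ E. \<exists>Y. Y \<subseteq> {..<n} \<and> c * real n \<le> real (card Y) \<and> k \<le> card (bad_set n (p n) \<epsilon> E Y)" n]
        by (simp add: q_def)
    qed
    also have "\<dots> \<le> 2^n * (real n ^ k * (4 ^ k * exp (-(c * real n * p n * e^2 / 4)) ^ k))"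
      by (rule fixed_n_bound[OF p0 e c])
    also have "c * real n * p n * e^2 / 4 = d * real n * p n" by (simp add: d_def)
    also have "2^n * (real n ^ k * (4 ^ k * exp (-(d * real n * p n)) ^ k)) \<le> exp (- real n)"
      by (rule numeric[OF n4 d pp lnp _ L_def kL]) (use lnT in \<open>simp add: T_def\<close>)
    finally show ?case using q0 by simp
  qed
  moreover have "(\<lambda>n. exp (- real n)) \<longlonglongrightarrow> 0"
    by (rule filterlim_compose[OF exp_at_bot]) (simp add: filterlim_uminus_at_bot filterlim_real_sequentially)
  ultimately have "q \<longlonglongrightarrow> 0"
    by (intro tendsto_sandwich[of "\<lambda>_. 0" q _ "\<lambda>n. exp (- real n)"]) (auto elim: eventually_mono)
  then have "(\<lambda>n. 1 - q n) \<longlonglongrightarrow> 1 - 0" by (intro tendsto_diff) auto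
  moreover have "(\<lambda>n. 1 - q n) = (\<lambda>n. dnp_prob n (p n) (G n))"
    unfolding q_def by (rule ext) (simp add: compl[of _ _ "G _"])
  ultimately show ?thesis unfolding G_def by simp
qed

end
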